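(* Let $K$ be a field of characteristic $0$, let $L=\mathcal{L}(x,y)$ be the free Lie algebra over $K$ freely generated by $x,y$, let $\delta$ be the derivation of $L$ with $\delta(x)=0$, $\delta(y)=x$, and $L^\delta=\ker\delta$. If $f\in L^\delta$ has degree $6$, then $f$ belongs to the Lie subalgebra of $L$ generated by $x$, $[y,x]$ and $[y,x,y,[y,x,x]]$.
   Context: Brackets are left-normed: $[a_1,a_2,\ldots,a_n]=[[\ldots[a_1,a_2],\ldots],a_n]$; thus $[y,x,y,[y,x,x]]=[[[y,x],y],[[y,x],x]]$. *)

theory Defs
  imports Main
begin

text \<open>Free associative algebra K<x,y> realised as coefficient functions on words
  over the alphabet {x,y}; the free Lie algebra L(x,y) is realised (standard
  identification) as the Lie subalgebra of K<x,y> generated by x and y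
  (the Lie polynomials), with bracket [p,q] = pq - qp.\<close>

datatype gen = Gx | Gy

type_synonym 'a npoly = "gen list \<Rightarrow> 'a"

definition nmult :: "'a::comm_ring_1 npoly \<Rightarrow> 'a npoly \<Rightarrow> 'a npoly" where
  "nmult p q = (\<lambda>w. \<Sum>i\<le>length w. p (take i w) * q (drop i w))"

definition nadd :: "'a::comm_ring_1 npoly \<Rightarrow> 'a npoly \<Rightarrow> 'a npoly" where
  "nadd p q = (\<lambda>w. p w + q w)"

definition nscale :: "'a::comm_ring_1 \<Rightarrow> 'a npoly \<Rightarrow> 'a npoly" where
  "nscale c p = (\<lambda>w. c * p w)"

definition brk :: "'a::comm_ring_1 npoly \<Rightarrow> 'a npoly \<Rightarrow> 'a npoly" where
  "brk p q = (\<lambda>w. nmult p q w - nmult q p w)"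

definition genX :: "'a::comm_ring_1 npoly" where
  "genX = (\<lambda>w. if w = [Gx] then 1 else 0)"

definition genY :: "'a::comm_ring_1 npoly" where
  "genY = (\<lambda>w. if w = [Gy] then 1 else 0)"

inductive_set lie_gen :: "'a::comm_ring_1 npoly set \<Rightarrow> 'a npoly set" for S where
  gen: "p \<in> S \<Longrightarrow> p \<in> lie_gen S"
| add: "p \<in> lie_gen S \<Longrightarrow> q \<in> lie_gen S \<Longrightarrow> nadd p q \<in> lie_gen S"
| scale: "p \<in> lie_gen S \<Longrightarrow> nscale c p \<in> lie_gen S"
| bracket: "p \<in> lie_gen S \<Longrightarrow> q \<in> lie_gen S \<Longrightarrow> brk p q \<in> lie_gen S"

definition free_lie :: "'a::comm_ring_1 npoly set" where
  "free_lie = lie_gen {genX, genY}"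

text \<open>The derivation delta with delta(x) = 0, delta(y) = x, extended to K<x,y>
  as a derivation: delta of a word is the sum of words obtained by replacing one
  occurrence of y by x.
  It restricts to the unique Lie derivation of L(x,y) with these values.\<close>
definition lie_delta :: "'a::comm_ring_1 npoly \<Rightarrow> 'a npoly" where
  "lie_delta p = (\<lambda>w. \<Sum>i\<in>{i. i < length w \<and> w ! i = Gx}. p (w[i := Gy]))"

definition homogeneous :: "nat \<Rightarrow> 'a::comm_ring_1 npoly \<Rightarrow> bool" where
  "homogeneous d p \<longleftrightarrow> (\<forall>w. p w \<noteq> 0 \<longrightarrow> length w = d)"

end

theory Submission
  imports Defs
begin


lemma nmult_Nil: "nmult p q [] = p [] * q []"
  by (simp add: nmult_def)

lemma nmult_Cons: "nmult p q (a#w) = p [] * q (a#w) + nmult (\<lambda>u. p (a#u)) q w"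
  unfolding nmult_def by (simp del: sum.atMost_Suc add: sum.atMost_Suc_shift)

lemma nmult_diff_left: "nmult (\<lambda>w. p w - p' w) q = (\<lambda>w. nmult p q w - nmult p' q w)"
  by (rule ext) (simp add: nmult_def algebra_simps sum_subtractf)
lemma nmult_diff_right: "nmult p (\<lambda>w. q w - q' w) = (\<lambda>w. nmult p q w - nmult p q' w)"
  by (rule ext) (simp add: nmult_def algebra_simps sum_subtractf)
lemma nmult_add_left: "nmult (\<lambda>w. p w + p' w) q = (\<lambda>w. nmult p q w + nmult p' q w)"
  by (rule ext) (simp add: nmult_def algebra_simps sum.distrib)
lemma nmult_add_right: "nmult p (\<lambda>w. q w + q' w) = (\<lambda>w. nmult p q w + nmult p q' w)"
  by (rule ext) (simp add: nmult_def algebra_simps sum.distrib)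
lemma nmult_scale_left: "nmult (\<lambda>w. c * p w) q = (\<lambda>w. c * nmult p q w)"
  by (rule ext) (simp add: nmult_def algebra_simps sum_distrib_left)
lemma nmult_scale_right: "nmult p (\<lambda>w. c * q w) = (\<lambda>w. c * nmult p q w)"
  by (rule ext) (simp add: nmult_def algebra_simps sum_distrib_left)
lemma nmult_zero_left: "nmult (\<lambda>w. 0) q = (\<lambda>w. 0)"
  by (rule ext) (simp add: nmult_def)
lemma nmult_zero_right: "nmult p (\<lambda>w. 0) = (\<lambda>w. 0)"
  by (rule ext) (simp add: nmult_def)

lemma nmult_assoc_pt: "nmult (nmult p q) r w = nmult p (nmult q r) w"
proof (induction w arbitrary: p q r)
  case Nil
  then show ?case by (simp add: nmult_Nil)
next
  case (Cons a w)
  have e: "(\<lambda>u. nmult p q (a#u)) = (\<lambda>u. p [] * q (a#u) + nmult (\<lambda>u. p (a#u)) q u)"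
    by (simp add: nmult_Cons)
  have "nmult (nmult p q) r (a#w) = p [] * q [] * r (a#w) + nmult (\<lambda>u. nmult p q (a#u)) r w"
    by (simp add: nmult_Cons nmult_Nil)
  also have "\<dots> = p [] * q [] * r (a#w) + p [] * nmult (\<lambda>u. q (a#u)) r w
      + nmult (nmult (\<lambda>u. p (a#u)) q) r w"
    unfolding e by (simp add: nmult_add_left nmult_scale_left algebra_simps)
  also have "\<dots> = nmult p (nmult q r) (a#w)"
    using Cons.IH by (simp add: nmult_Cons nmult_Nil algebra_simps)
  finally show ?case .
qed

lemma nmult_assoc: "nmult (nmult p q) r = nmult p (nmult q r)"
  by (rule ext) (rule nmult_assoc_pt)

lemma jacobi: "brk P (brk Q z) = nadd (brk (brk P Q) z) (nscale (-1) (brk (brk P z) Q))"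
  unfolding brk_def nadd_def nscale_def
  by (rule ext) (simp add: nmult_diff_left nmult_diff_right nmult_assoc algebra_simps)



definition gv :: "gen \<Rightarrow> 'a::comm_ring_1 npoly" where
  "gv a = (\<lambda>w. if w = [a] then 1 else 0)"

lemma gv_simps: "gv Gx = genX" "gv Gy = genY"
  by (simp_all add: gv_def genX_def genY_def)

definition bstep :: "'a::comm_ring_1 npoly \<Rightarrow> gen \<Rightarrow> 'a npoly" where
  "bstep p b = brk p (gv b)"

fun lbw :: "gen list \<Rightarrow> 'a::comm_ring_1 npoly" where
  "lbw [] = (\<lambda>_. 0)"
| "lbw (a#r) = foldl bstep (gv a) r"

lemma lbw_snoc: "u \<noteq> [] \<Longrightarrow> lbw (u @ [b]) = brk (lbw u) (gv b)"
  by (cases u) (simp_all add: bstep_def)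

lemma brk_zero_left: "brk (\<lambda>_. 0) q = (\<lambda>_. 0)"
  by (simp add: brk_def nmult_zero_left nmult_zero_right)
lemma brk_zero_right: "brk p (\<lambda>_. 0) = (\<lambda>_. 0)"
  by (simp add: brk_def nmult_zero_left nmult_zero_right)
lemma brk_add_left: "brk (nadd p p') q = nadd (brk p q) (brk p' q)"
  by (rule ext) (simp add: brk_def nadd_def nmult_add_left nmult_add_right)
lemma brk_add_right: "brk q (nadd p p') = nadd (brk q p) (brk q p')"
  by (rule ext) (simp add: brk_def nadd_def nmult_add_left nmult_add_right)
lemma brk_scale_left: "brk (nscale c p) q = nscale c (brk p q)"
  by (rule ext) (simp add: brk_def nscale_def nmult_scale_left nmult_scale_right algebra_simps)
lemma brk_scale_right: "brk q (nscale c p) = nscale c (brk q p)"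
  by (rule ext) (simp add: brk_def nscale_def nmult_scale_left nmult_scale_right algebra_simps)
lemma brk_self: "brk p p = (\<lambda>_. 0)"
  by (simp add: brk_def)
lemma brk_anti: "brk q p = nscale (-1) (brk p q)"
  by (rule ext) (simp add: brk_def nscale_def)

lemma foldl_bstep_zero: "foldl bstep (\<lambda>_. 0) r = (\<lambda>_. 0)"
  by (induction r) (simp_all add: bstep_def brk_zero_left)
lemma foldl_bstep_scale: "foldl bstep (nscale c p) r = nscale c (foldl bstep p r)"
  by (induction r arbitrary: p) (simp_all add: bstep_def brk_scale_left)

lemma lbw_same: "lbw (a#a#r) = (\<lambda>_. (0::'a::comm_ring_1))"
  by (simp add: bstep_def brk_self foldl_bstep_zero)
lemma lbw_swap: "lbw (a#b#r) = nscale (-1) (lbw (b#a#r) :: 'a::comm_ring_1 npoly)"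
proof -
  have "brk (gv a) (gv b) = nscale (-1) (brk (gv b) (gv a) :: 'a npoly)" by (rule brk_anti)
  then show ?thesis by (simp add: bstep_def foldl_bstep_scale)
qed

inductive_set Sp :: "nat \<Rightarrow> 'a::comm_ring_1 npoly set" for n where
  zero: "(\<lambda>_. 0) \<in> Sp n"
| lb: "length w = n \<Longrightarrow> lbw w \<in> Sp n"
| add: "p \<in> Sp n \<Longrightarrow> q \<in> Sp n \<Longrightarrow> nadd p q \<in> Sp n"
| scale: "p \<in> Sp n \<Longrightarrow> nscale c p \<in> Sp n"

lemma Sp_bstep: "p \<in> Sp n \<Longrightarrow> brk p (gv b) \<in> Sp (Suc n)"
proof (induction rule: Sp.induct)
  case zero
  then show ?case by (simp add: brk_zero_left Sp.zero)
next
  case (lb w)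
  show ?case
  proof (cases "w = []")
    case True
    then show ?thesis by (simp add: brk_zero_left Sp.zero)
  next
    case False
    then have "brk (lbw w) (gv b) = lbw (w @ [b])" by (simp add: lbw_snoc)
    then show ?thesis using lb by (metis Sp.lb length_append_singleton)
  qed
next
  case (add p q)
  then show ?case by (simp add: brk_add_left Sp.add)
next
  case (scale p c)
  then show ?case by (simp add: brk_scale_left Sp.scale)
qed

lemma lemmaB: "w \<noteq> [] \<Longrightarrow> u \<noteq> [] \<Longrightarrow> brk (lbw u) (lbw w) \<in> (Sp (length u + length w) :: 'a::comm_ring_1 npoly set)"
proof (induction w arbitrary: u rule: rev_induct)
  case Nil
  then show ?case by simp
next
  case (snoc b w0)
  show ?case
  proof (cases "w0 = []")
    case True
    have "lbw [b] = (gv b :: 'a npoly)" by simp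
    then have "brk (lbw u) (lbw (w0 @ [b])) = (lbw (u @ [b]) :: 'a npoly)"
      using True snoc.prems(2) by (simp add: lbw_snoc del: lbw.simps(2))
    moreover have "lbw (u @ [b]) \<in> Sp (length u + length (w0 @ [b]))"
      using True by (intro Sp.lb) simp
    ultimately show ?thesis by simp
  next
    case False
    have j: "brk (lbw u) (lbw (w0 @ [b])) = (nadd (brk (brk (lbw u) (lbw w0)) (gv b))
        (nscale (-1) (brk (brk (lbw u) (gv b)) (lbw w0))) :: 'a npoly)"
      using False by (simp add: lbw_snoc jacobi del: lbw.simps(2))
    have 1: "brk (brk (lbw u) (lbw w0)) (gv b) \<in> (Sp (length u + length (w0 @ [b])) :: 'a npoly set)"
    proof -
      have "brk (brk (lbw u) (lbw w0)) (gv b) \<in> (Sp (Suc (length u + length w0)) :: 'a npoly set)"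
        by (rule Sp_bstep[OF snoc.IH[OF False snoc.prems(2)]])
      then show ?thesis by simp
    qed
    have "brk (lbw (u @ [b])) (lbw w0) \<in> (Sp (length (u @ [b]) + length w0) :: 'a npoly set)"
      using snoc.IH[OF False, of "u @ [b]"] by simp
    then have 2: "brk (brk (lbw u) (gv b)) (lbw w0) \<in> (Sp (length u + length (w0 @ [b])) :: 'a npoly set)"
      using snoc.prems(2) by (simp add: lbw_snoc del: lbw.simps(2))
    show ?thesis unfolding j using 1 2 by (intro Sp.add Sp.scale)
  qed
qed



lemma Sp_brk_lb: "p \<in> Sp i \<Longrightarrow> brk p (lbw w) \<in> (Sp (i + length w) :: 'a::comm_ring_1 npoly set)"
proof (induction rule: Sp.induct)
  case zero
  then show ?case by (simp add: brk_zero_left Sp.zero)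
next
  case (lb u)
  show ?case
  proof (cases "u = [] \<or> w = []")
    case True
    then show ?thesis by (auto simp: brk_zero_left brk_zero_right Sp.zero)
  next
    case False
    then show ?thesis using lemmaB[of w u] lb by auto
  qed
next
  case (add p q)
  then show ?case by (simp add: brk_add_left Sp.add)
next
  case (scale p c)
  then show ?case by (simp add: brk_scale_left Sp.scale)
qed

lemma Sp_brk: "q \<in> Sp j \<Longrightarrow> p \<in> Sp i \<Longrightarrow> brk p q \<in> (Sp (i + j) :: 'a::comm_ring_1 npoly set)"
proof (induction rule: Sp.induct)
  case zero
  then show ?case by (simp add: brk_zero_right Sp.zero)
next
  case (lb w)
  then show ?case using Sp_brk_lb by blast
next
  case (add p' q')
  then show ?case by (simp add: brk_add_right Sp.add)
next
  case (scale p' c)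
  then show ?case by (simp add: brk_scale_right Sp.scale)
qed

definition hcomp :: "nat \<Rightarrow> 'a::comm_ring_1 npoly \<Rightarrow> 'a npoly" where
  "hcomp n p = (\<lambda>w. if length w = n then p w else 0)"

lemma nmult_comp: "nmult (hcomp i p) (hcomp j q) w =
   (if length w = i + j then p (take i w) * q (drop i w) else 0)"
proof -
  have "nmult (hcomp i p) (hcomp j q) w = (\<Sum>k\<le>length w. if k = i then
      (if length w = i + j then p (take i w) * q (drop i w) else 0) else 0)"
    unfolding nmult_def hcomp_def
    by (rule sum.cong) (auto simp: min_def)
  also have "\<dots> = (if length w = i + j then p (take i w) * q (drop i w) else 0)"
    by (auto simp: sum.delta)
  finally show ?thesis .
qed

lemma hcomp_nmult: "hcomp n (nmult p q) w = (\<Sum>i\<le>n. nmult (hcomp i p) (hcomp (n - i) q) w)"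
proof (cases "length w = n")
  case True
  then show ?thesis unfolding nmult_comp by (simp add: hcomp_def nmult_def)
next
  case False
  then show ?thesis unfolding nmult_comp by (simp add: hcomp_def)
qed

lemma sum_flip: "(\<Sum>i\<le>n. g (n - i)) = (\<Sum>i\<le>(n::nat). (g i :: 'b::comm_monoid_add))"
proof -
  have "(\<Sum>i<Suc n. g (Suc n - Suc i)) = (\<Sum>i<Suc n. g i)" by (rule sum.nat_diff_reindex)
  then show ?thesis by (simp add: lessThan_Suc_atMost)
qed

lemma hcomp_brk: "hcomp n (brk p q) = (\<lambda>w. \<Sum>i\<le>n. brk (hcomp i p) (hcomp (n - i) q) w)"
proof (rule ext)
  fix w
  have a: "hcomp n (brk p q) w = hcomp n (nmult p q) w - hcomp n (nmult q p) w"
    by (simp add: hcomp_def brk_def)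
  have b: "(\<Sum>i\<le>n. nmult (hcomp (n - i) q) (hcomp i p) w) = (\<Sum>i\<le>n. nmult (hcomp i q) (hcomp (n - i) p) w)"
  proof -
    have "(\<Sum>i\<le>n. nmult (hcomp (n - i) q) (hcomp (n - (n - i)) p) w) = (\<Sum>i\<le>n. nmult (hcomp i q) (hcomp (n - i) p) w)"
      by (rule sum_flip[where g = "\<lambda>i. nmult (hcomp i q) (hcomp (n - i) p) w"])
    moreover have "(\<Sum>i\<le>n. nmult (hcomp (n - i) q) (hcomp (n - (n - i)) p) w) = (\<Sum>i\<le>n. nmult (hcomp (n - i) q) (hcomp i p) w)"
      by (rule sum.cong) auto
    ultimately show ?thesis by simp
  qed
  show "hcomp n (brk p q) w = (\<Sum>i\<le>n. brk (hcomp i p) (hcomp (n - i) q) w)"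
    unfolding a hcomp_nmult by (simp add: brk_def sum_subtractf b)
qed

lemma Sp_sum: "(\<And>i. i \<le> (n::nat) \<Longrightarrow> g i \<in> Sp m) \<Longrightarrow> (\<lambda>w. \<Sum>i\<le>n. g i w) \<in> (Sp m :: 'a::comm_ring_1 npoly set)"
proof (induction n)
  case 0
  then show ?case by simp
next
  case (Suc n)
  have "(\<lambda>w. \<Sum>i\<le>Suc n. g i w) = nadd (\<lambda>w. \<Sum>i\<le>n. g i w) (g (Suc n))"
    by (simp add: nadd_def)
  then show ?case using Suc by (simp add: Sp.add)
qed

lemma lemmaA: "P \<in> lie_gen {genX, genY} \<Longrightarrow> hcomp n P \<in> (Sp n :: 'a::comm_ring_1 npoly set)"
proof (induction arbitrary: n rule: lie_gen.induct)
  case (gen p)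
  then obtain a where pa: "p = gv a"
    by (metis gv_simps(1) gv_simps(2) insert_iff singletonD)
  show ?case
  proof (cases "n = 1")
    case True
    then have "hcomp n p = lbw [a]" using pa by (auto simp: hcomp_def gv_def)
    then show ?thesis using True Sp.lb[of "[a]" n] by simp
  next
    case False
    then have "hcomp n p = (\<lambda>_. 0)" using pa by (auto simp: hcomp_def gv_def)
    then show ?thesis by (simp add: Sp.zero)
  qed
next
  case (add p q)
  have "hcomp n (nadd p q) = nadd (hcomp n p) (hcomp n q)" by (auto simp: hcomp_def nadd_def)
  then show ?case using add by (simp add: Sp.add)
next
  case (scale p c)
  have "hcomp n (nscale c p) = nscale c (hcomp n p)" by (auto simp: hcomp_def nscale_def)
  then show ?case using scale by (simp add: Sp.scale)
next
  case (bracket p q)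
  show ?case unfolding hcomp_brk
  proof (rule Sp_sum)
    fix i assume "i \<le> n"
    have "brk (hcomp i p) (hcomp (n - i) q) \<in> (Sp (i + (n - i)) :: 'a npoly set)"
      using bracket.IH Sp_brk by blast
    then show "brk (hcomp i p) (hcomp (n - i) q) \<in> Sp n" using \<open>i \<le> n\<close> by simp
  qed
qed



definition W4 :: "gen list list" where "W4 = List.n_lists 4 [Gx, Gy]"

lemma set_W4: "set W4 = {r. length r = 4}"
proof -
  have "set [Gx, Gy] = UNIV" using gen.exhaust by auto
  then show ?thesis by (simp add: W4_def set_n_lists)
qed

lemma Sp6: "p \<in> Sp 6 \<Longrightarrow> \<exists>c. p = (\<lambda>v. \<Sum>w\<in>set W4. c w * lbw (Gy#Gx#w) v :: 'a::comm_ring_1)"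
proof (induction rule: Sp.induct)
  case zero
  then show ?case by (rule exI[of _ "\<lambda>_. 0"]) simp
next
  case (lb w)
  then obtain a b r where w: "w = a#b#r" and r: "r \<in> set W4"
    by (cases w; cases "tl w") (auto simp: set_W4)
  have ind: "(\<Sum>u\<in>set W4. (if u = r then k else 0) * lbw (Gy#Gx#u) v) = k * lbw (Gy#Gx#r) v" for k v
  proof -
    have "(\<Sum>u\<in>set W4. (if u = r then k else 0) * lbw (Gy#Gx#u) v) =
       (\<Sum>u\<in>set W4. if u = r then k * lbw (Gy#Gx#r) v else 0)"
      by (rule sum.cong) auto
    then show ?thesis using r by simp
  qed
  show ?case
  proof (cases "a = b")
    case True
    then show ?thesis using w by (intro exI[of _ "\<lambda>_. 0"]) (simp add: lbw_same del: lbw.simps(2))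
  next
    case False
    then show ?thesis
    proof (cases a)
      case Gx
      then have "b = Gy" using False by (cases b) auto
      then have "lbw w = nscale (-1) (lbw (Gy#Gx#r) :: 'a npoly)" using w Gx lbw_swap by metis
      then show ?thesis
        by (intro exI[of _ "\<lambda>u. if u = r then -1 else 0"]) (simp add: ind nscale_def del: lbw.simps(2))
    next
      case Gy
      then have "b = Gx" using False by (cases b) auto
      then show ?thesis using w Gy
        by (intro exI[of _ "\<lambda>u. if u = r then 1 else 0"]) (simp add: ind del: lbw.simps(2))
    qed
  qed
next
  case (add p q)
  then obtain c1 c2 where "p = (\<lambda>v. \<Sum>w\<in>set W4. c1 w * lbw (Gy#Gx#w) v)"
    "q = (\<lambda>v. \<Sum>w\<in>set W4. c2 w * lbw (Gy#Gx#w) v)" by blast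
  then show ?case
    by (intro exI[of _ "\<lambda>u. c1 u + c2 u"]) (simp add: nadd_def algebra_simps sum.distrib)
next
  case (scale p k)
  then obtain c1 where "p = (\<lambda>v. \<Sum>w\<in>set W4. c1 w * lbw (Gy#Gx#w) v)" by blast
  then show ?case
    by (intro exI[of _ "\<lambda>u. k * c1 u"]) (simp add: nscale_def algebra_simps sum_distrib_left)
qed



lemma nmult_gv_right: "nmult p (gv b) v = (if v \<noteq> [] \<and> last v = b then p (butlast v) else 0)"
proof (induction v arbitrary: p)
  case Nil
  then show ?case by (simp add: nmult_Nil gv_def)
next
  case (Cons a w)
  show ?case using Cons[of "\<lambda>u. p (a#u)"] by (cases w) (auto simp: nmult_Cons gv_def)
qed

lemma nmult_unit_left: "nmult (\<lambda>u. if u = [] then 1 else 0) p w = p w"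
proof (cases w)
  case Nil
  then show ?thesis by (simp add: nmult_Nil)
next
  case (Cons a w')
  have "(\<lambda>u. if a # u = [] then (1::'a) else 0) = (\<lambda>u. 0)" by auto
  then show ?thesis using Cons by (simp add: nmult_Cons nmult_zero_left)
qed

lemma nmult_gv_left: "nmult (gv b) p v = (if v \<noteq> [] \<and> hd v = b then p (tl v) else 0)"
proof (cases v)
  case Nil
  then show ?thesis by (simp add: nmult_Nil gv_def)
next
  case (Cons a w)
  show ?thesis
  proof (cases "a = b")
    case True
    have "(\<lambda>u. gv b (a#u)) = (\<lambda>u. if u = [] then (1::'a) else 0)" using True by (auto simp: gv_def)
    then show ?thesis using Cons True by (simp add: nmult_Cons nmult_unit_left) (simp add: gv_def)
  next
    case False
    have "(\<lambda>u. gv b (a#u)) = (\<lambda>u. (0::'a))" using False by (auto simp: gv_def)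
    then show ?thesis using Cons False by (simp add: nmult_Cons nmult_zero_left) (simp add: gv_def)
  qed
qed

lemma bstep_app: "bstep p b v = (if v \<noteq> [] \<and> last v = b then p (butlast v) else 0)
   - (if v \<noteq> [] \<and> hd v = b then p (tl v) else 0)"
  by (simp add: bstep_def brk_def nmult_gv_left nmult_gv_right)

lemma gv_app: "gv b v = (if v = [b] then 1 else 0)" by (simp add: gv_def)

lemma nmult_eval: "nmult p q v = (\<Sum>i\<leftarrow>[0..<Suc (length v)]. p (take i v) * q (drop i v))"
  by (simp only: nmult_def interv_sum_list_conv_sum_set_nat set_upt atLeast0LessThan lessThan_Suc_atMost)





lemma lie_delta_eval: "lie_delta p v = (\<Sum>i\<leftarrow>[0..<length v]. if v ! i = Gx then p (v[i := Gy]) else 0)"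
proof -
  have "{i. i < length v \<and> v ! i = Gx} = {i \<in> {..<length v}. v ! i = Gx}" by auto
  then show ?thesis
    by (simp only: lie_delta_def sum.inter_filter[OF finite_lessThan] interv_sum_list_conv_sum_set_nat set_upt atLeast0LessThan)
qed

lemma hom_nmult: "homogeneous m p \<Longrightarrow> homogeneous n q \<Longrightarrow> homogeneous (m + n) (nmult p q)"
  unfolding homogeneous_def
proof (intro allI impI)
  fix w assume hp: "\<forall>w. p w \<noteq> 0 \<longrightarrow> length w = m" and hq: "\<forall>w. q w \<noteq> 0 \<longrightarrow> length w = n"
    and ne: "nmult p q w \<noteq> 0"
  then obtain i where i: "i \<le> length w" "p (take i w) * q (drop i w) \<noteq> 0"
    unfolding nmult_def by (metis (no_types, lifting) atMost_iff sum.neutral)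
  then have "p (take i w) \<noteq> 0" "q (drop i w) \<noteq> 0" by (metis mult_zero_left, metis mult_zero_right)
  then have "length (take i w) = m" "length (drop i w) = n" using hp hq by blast+
  then show "length w = m + n" using i(1) by simp
qed

lemma hom_brk: "homogeneous m p \<Longrightarrow> homogeneous n q \<Longrightarrow> homogeneous (m + n) (brk p q)"
  using hom_nmult[of m p n q] hom_nmult[of n q m p] unfolding homogeneous_def brk_def
  by (metis add.commute diff_zero)
lemma hom_nadd: "homogeneous m p \<Longrightarrow> homogeneous m q \<Longrightarrow> homogeneous m (nadd p q)"
  unfolding homogeneous_def nadd_def by (metis add.left_neutral)
lemma hom_nscale: "homogeneous m p \<Longrightarrow> homogeneous m (nscale c p)"
  unfolding homogeneous_def nscale_def by (metis mult_zero_right)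
lemma hom_genX: "homogeneous 1 genX" and hom_genY: "homogeneous 1 genY"
  unfolding homogeneous_def genX_def genY_def by auto

lemma hom_gv: "homogeneous 1 (gv b)" unfolding homogeneous_def gv_def by auto

lemma hom_lbw: "homogeneous (length w) (lbw w)"
proof (induction w rule: rev_induct)
  case Nil
  then show ?case by (simp add: homogeneous_def)
next
  case (snoc b w)
  show ?case
  proof (cases "w = []")
    case True
    then show ?thesis using hom_gv by simp
  next
    case False
    then show ?thesis using hom_brk[OF snoc hom_gv] by (simp add: lbw_snoc del: lbw.simps(2))
  qed
qed

lemma eq6: "homogeneous 6 p \<Longrightarrow> homogeneous 6 q \<Longrightarrow> (\<forall>v\<in>set (List.n_lists 6 [Gx, Gy]). p v = q v) \<Longrightarrow> p = q"
proof (rule ext)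
  fix v
  assume hp: "homogeneous 6 p" and hq: "homogeneous 6 q" and all: "\<forall>v\<in>set (List.n_lists 6 [Gx, Gy]). p v = q v"
  have U: "set [Gx, Gy] = UNIV" using gen.exhaust by auto
  show "p v = q v"
  proof (cases "length v = 6")
    case True
    have "set v \<subseteq> {Gx, Gy}" by (metis gen.exhaust insertCI subsetI)
    then show ?thesis using all True by (simp add: set_n_lists)
  next
    case False
    then show ?thesis using hp hq unfolding homogeneous_def by metis
  qed
qed

lemma kz: "(k::'a::field_char_0) * s = 0 \<Longrightarrow> k \<noteq> 0 \<Longrightarrow> s = 0" by simp
lemma lc1: "(x::'a::comm_ring_1) - y = ka * s1 \<Longrightarrow> s1 = 0 \<Longrightarrow> x = y" by simp
lemma lc2: "(x::'a::comm_ring_1) - y = ka * s1 + kb * s2 \<Longrightarrow> s1 = 0 \<Longrightarrow> s2 = 0 \<Longrightarrow> x = y" by simp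


theorem proposition5p4:
  fixes f :: "'a::field_char_0 npoly"
  assumes "f \<in> free_lie"
    and "lie_delta f = (\<lambda>_. 0)"
    and "homogeneous 6 f"
  shows "f \<in> lie_gen {genX, brk genY genX,
           brk (brk (brk genY genX) genY) (brk (brk genY genX) genX)}"
proof -
  have "hcomp 6 f \<in> (Sp 6 :: 'a npoly set)" using lemmaA assms(1) unfolding free_lie_def by blast
  moreover have "hcomp 6 f = f" using assms(3) unfolding hcomp_def homogeneous_def by (rule_tac ext) auto
  ultimately obtain c where fc: "f = (\<lambda>v. \<Sum>w\<in>set W4. c w * lbw (Gy#Gx#w) v)" using Sp6 by metis
  have W4e: "W4 = [[Gx,Gx,Gx,Gx], [Gy,Gx,Gx,Gx], [Gx,Gy,Gx,Gx], [Gy,Gy,Gx,Gx], [Gx,Gx,Gy,Gx], [Gy,Gx,Gy,Gx], [Gx,Gy,Gy,Gx], [Gy,Gy,Gy,Gx], [Gx,Gx,Gx,Gy], [Gy,Gx,Gx,Gy], [Gx,Gy,Gx,Gy], [Gy,Gy,Gx,Gy], [Gx,Gx,Gy,Gy], [Gy,Gx,Gy,Gy], [Gx,Gy,Gy,Gy], [Gy,Gy,Gy,Gy]]" by (simp add: W4_def numeral_eq_Suc)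
  have fv: "\<And>v. f v = c [Gx,Gx,Gx,Gx] * lbw [Gy,Gx,Gx,Gx,Gx,Gx] v + c [Gy,Gx,Gx,Gx] * lbw [Gy,Gx,Gy,Gx,Gx,Gx] v + c [Gx,Gy,Gx,Gx] * lbw [Gy,Gx,Gx,Gy,Gx,Gx] v + c [Gy,Gy,Gx,Gx] * lbw [Gy,Gx,Gy,Gy,Gx,Gx] v + c [Gx,Gx,Gy,Gx] * lbw [Gy,Gx,Gx,Gx,Gy,Gx] v + c [Gy,Gx,Gy,Gx] * lbw [Gy,Gx,Gy,Gx,Gy,Gx] v + c [Gx,Gy,Gy,Gx] * lbw [Gy,Gx,Gx,Gy,Gy,Gx] v + c [Gy,Gy,Gy,Gx] * lbw [Gy,Gx,Gy,Gy,Gy,Gx] v + c [Gx,Gx,Gx,Gy] * lbw [Gy,Gx,Gx,Gx,Gx,Gy] v + c [Gy,Gx,Gx,Gy] * lbw [Gy,Gx,Gy,Gx,Gx,Gy] v + c [Gx,Gy,Gx,Gy] * lbw [Gy,Gx,Gx,Gy,Gx,Gy] v + c [Gy,Gy,Gx,Gy] * lbw [Gy,Gx,Gy,Gy,Gx,Gy] v + c [Gx,Gx,Gy,Gy] * lbw [Gy,Gx,Gx,Gx,Gy,Gy] v + c [Gy,Gx,Gy,Gy] * lbw [Gy,Gx,Gy,Gx,Gy,Gy] v + c [Gx,Gy,Gy,Gy] * lbw [Gy,Gx,Gx,Gy,Gy,Gy] v + c [Gy,Gy,Gy,Gy] * lbw [Gy,Gx,Gy,Gy,Gy,Gy] v"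
    unfolding fc W4e by (simp del: lbw.simps)
  have dz: "\<And>v. lie_delta f v = 0" using assms(2) by simp
  note ev = lie_delta_eval fv bstep_app gv_app
  have s1: "c [Gx,Gx,Gx,Gy] + c [Gx,Gx,Gy,Gx] + c [Gx,Gy,Gx,Gx] + c [Gy,Gx,Gx,Gx] = 0"
  proof -
    have "lie_delta f [Gy,Gx,Gx,Gx,Gx,Gx] = (1) * (c [Gx,Gx,Gx,Gy] + c [Gx,Gx,Gy,Gx] + c [Gx,Gy,Gx,Gx] + c [Gy,Gx,Gx,Gx])" by (simp add: ev algebra_simps)
    then have "(1) * (c [Gx,Gx,Gx,Gy] + c [Gx,Gx,Gy,Gx] + c [Gx,Gy,Gx,Gx] + c [Gy,Gx,Gx,Gx]) = 0" by (simp only: dz)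
    then show ?thesis by (rule kz) simp
  qed
  have s2: "c [Gx,Gx,Gy,Gy] + c [Gx,Gy,Gx,Gy] + c [Gx,Gy,Gy,Gx] + c [Gy,Gx,Gx,Gy] + c [Gy,Gx,Gy,Gx] + c [Gy,Gy,Gx,Gx] = 0"
  proof -
    have "lie_delta f [Gy,Gy,Gx,Gx,Gx,Gx] = (-2) * (c [Gx,Gx,Gy,Gy] + c [Gx,Gy,Gx,Gy] + c [Gx,Gy,Gy,Gx] + c [Gy,Gx,Gx,Gy] + c [Gy,Gx,Gy,Gx] + c [Gy,Gy,Gx,Gx])" by (simp add: ev algebra_simps)
    then have "(-2) * (c [Gx,Gx,Gy,Gy] + c [Gx,Gy,Gx,Gy] + c [Gx,Gy,Gy,Gx] + c [Gy,Gx,Gx,Gy] + c [Gy,Gx,Gy,Gx] + c [Gy,Gy,Gx,Gx]) = 0" by (simp only: dz)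
    then show ?thesis by (rule kz) simp
  qed
  have s3: "c [Gx,Gx,Gy,Gy] + 2 * c [Gx,Gy,Gx,Gy] + 3 * c [Gx,Gy,Gy,Gx] + 2 * c [Gy,Gx,Gx,Gy] + 3 * c [Gy,Gx,Gy,Gx] + 4 * c [Gy,Gy,Gx,Gx] = 0"
  proof -
    have "lie_delta f [Gx,Gy,Gy,Gx,Gx,Gx] = (1) * (c [Gx,Gx,Gy,Gy] + 2 * c [Gx,Gy,Gx,Gy] + 3 * c [Gx,Gy,Gy,Gx] + 2 * c [Gy,Gx,Gx,Gy] + 3 * c [Gy,Gx,Gy,Gx] + 4 * c [Gy,Gy,Gx,Gx])" by (simp add: ev algebra_simps)
    then have "(1) * (c [Gx,Gx,Gy,Gy] + 2 * c [Gx,Gy,Gx,Gy] + 3 * c [Gx,Gy,Gy,Gx] + 2 * c [Gy,Gx,Gx,Gy] + 3 * c [Gy,Gx,Gy,Gx] + 4 * c [Gy,Gy,Gx,Gx]) = 0" by (simp only: dz)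
    then show ?thesis by (rule kz) simp
  qed
  have s4: "c [Gx,Gy,Gy,Gy] + c [Gy,Gx,Gy,Gy] + c [Gy,Gy,Gx,Gy] + c [Gy,Gy,Gy,Gx] = 0"
  proof -
    have "lie_delta f [Gx,Gx,Gx,Gy,Gy,Gy] = (-3) * (c [Gx,Gy,Gy,Gy] + c [Gy,Gx,Gy,Gy] + c [Gy,Gy,Gx,Gy] + c [Gy,Gy,Gy,Gx])" by (simp add: ev algebra_simps)
    then have "(-3) * (c [Gx,Gy,Gy,Gy] + c [Gy,Gx,Gy,Gy] + c [Gy,Gy,Gx,Gy] + c [Gy,Gy,Gy,Gx]) = 0" by (simp only: dz)
    then show ?thesis by (rule kz) simp
  qed
  have s5: "c [Gx,Gy,Gy,Gy] + c [Gy,Gx,Gy,Gy] + -1 * c [Gy,Gy,Gx,Gy] + -3 * c [Gy,Gy,Gy,Gx] = 0"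
  proof -
    have "lie_delta f [Gx,Gx,Gy,Gy,Gx,Gy] = (1) * (c [Gx,Gy,Gy,Gy] + c [Gy,Gx,Gy,Gy] + -1 * c [Gy,Gy,Gx,Gy] + -3 * c [Gy,Gy,Gy,Gx])" by (simp add: ev algebra_simps)
    then have "(1) * (c [Gx,Gy,Gy,Gy] + c [Gy,Gx,Gy,Gy] + -1 * c [Gy,Gy,Gx,Gy] + -3 * c [Gy,Gy,Gy,Gx]) = 0" by (simp only: dz)
    then show ?thesis by (rule kz) simp
  qed
  have s6: "c [Gy,Gy,Gy,Gy] = 0"
  proof -
    have "lie_delta f [Gy,Gy,Gy,Gy,Gx,Gx] = (-4) * (c [Gy,Gy,Gy,Gy])" by (simp add: ev algebra_simps)
    then have "(-4) * (c [Gy,Gy,Gy,Gy]) = 0" by (simp only: dz)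
    then show ?thesis by (rule kz) simp
  qed
  have p1: "c [Gy,Gx,Gx,Gx] = - (c [Gx,Gx,Gx,Gy] + c [Gx,Gx,Gy,Gx] + c [Gx,Gy,Gx,Gx])"
    by (rule lc1[where ka=1, OF _ s1]) (simp add: algebra_simps)
  have p2: "c [Gx,Gx,Gy,Gy] = c [Gx,Gy,Gy,Gx] + c [Gy,Gx,Gy,Gx] + 2 * c [Gy,Gy,Gx,Gx]"
    by (rule lc2[where ka=2 and kb="-1", OF _ s2 s3]) (simp add: algebra_simps)
  have p3: "c [Gx,Gy,Gx,Gy] = - (2 * c [Gx,Gy,Gy,Gx] + c [Gy,Gx,Gx,Gy] + 2 * c [Gy,Gx,Gy,Gx] + 3 * c [Gy,Gy,Gx,Gx])"
    by (rule lc2[where ka="-1" and kb=1, OF _ s2 s3]) (simp add: algebra_simps)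
  have p4: "c [Gy,Gy,Gx,Gy] = - 2 * c [Gy,Gy,Gy,Gx]"
    by (rule lc2[where ka="1/2" and kb="-1/2", OF _ s4 s5]) (simp add: algebra_simps)
  have p5: "c [Gx,Gy,Gy,Gy] = c [Gy,Gy,Gy,Gx] - c [Gy,Gx,Gy,Gy]"
    by (rule lc2[where ka="1/2" and kb="1/2", OF _ s4 s5]) (simp add: algebra_simps)
  have p6: "c [Gy,Gy,Gy,Gy] = 0" using s6 by simp
  define T where "T = nadd (nscale (c [Gx,Gx,Gx,Gx]) (lbw [Gy,Gx,Gx,Gx,Gx,Gx])) (nadd (nscale (- (2 * c [Gx,Gx,Gx,Gy] + c [Gx,Gx,Gy,Gx])) (brk (lbw [Gy,Gx,Gx,Gx]) (lbw [Gy,Gx]))) (nscale (c [Gx,Gy,Gy,Gx] + c [Gy,Gx,Gy,Gx] + 3 * c [Gy,Gy,Gx,Gx]) (brk (lbw [Gy,Gx,Gy]) (lbw [Gy,Gx,Gx]))))"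
  have hT: "homogeneous 6 T"
  proof -
    have "homogeneous (length [Gy,Gx,Gx,Gx,Gx,Gx]) (lbw [Gy,Gx,Gx,Gx,Gx,Gx] :: 'a npoly)" by (rule hom_lbw)
    then have h1: "homogeneous 6 (lbw [Gy,Gx,Gx,Gx,Gx,Gx] :: 'a npoly)" by (simp add: numeral_eq_Suc del: lbw.simps)
    have "homogeneous (length [Gy,Gx,Gx,Gx] + length [Gy,Gx]) (brk (lbw [Gy,Gx,Gx,Gx]) (lbw [Gy,Gx]) :: 'a npoly)"
      by (rule hom_brk[OF hom_lbw hom_lbw])
    then have h2: "homogeneous 6 (brk (lbw [Gy,Gx,Gx,Gx]) (lbw [Gy,Gx]) :: 'a npoly)" by (simp add: numeral_eq_Suc del: lbw.simps)
    have "homogeneous (length [Gy,Gx,Gy] + length [Gy,Gx,Gx]) (brk (lbw [Gy,Gx,Gy]) (lbw [Gy,Gx,Gx]) :: 'a npoly)"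
      by (rule hom_brk[OF hom_lbw hom_lbw])
    then have h3: "homogeneous 6 (brk (lbw [Gy,Gx,Gy]) (lbw [Gy,Gx,Gx]) :: 'a npoly)" by (simp add: numeral_eq_Suc del: lbw.simps)
    show ?thesis unfolding T_def by (intro hom_nadd hom_nscale h1 h2 h3)
  qed
  have "\<forall>v\<in>set (List.n_lists 6 [Gx, Gy]). f v = T v"
    by (simp add: numeral_eq_Suc T_def nadd_def nscale_def brk_def nmult_eval fv p1 p2 p3 p4 p5 p6 bstep_app gv_app algebra_simps)
  then have "f = T" using eq6 assms(3) hT by blast
  moreover have "T \<in> lie_gen {genX, brk genY genX,
           brk (brk (brk genY genX) genY) (brk (brk genY genX) genX)}" (is "_ \<in> lie_gen ?S")
  proof -
    have u: "brk genY genX \<in> lie_gen ?S" by (rule lie_gen.gen) simp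
    have x: "genX \<in> lie_gen ?S" by (rule lie_gen.gen) simp
    have w: "brk (brk (brk genY genX) genY) (brk (brk genY genX) genX) \<in> lie_gen ?S" by (rule lie_gen.gen) simp
    have e1: "lbw [Gy,Gx,Gx,Gx,Gx,Gx] = (brk (brk (brk (brk (brk genY genX) genX) genX) genX) genX :: 'a npoly)"
      by (simp add: bstep_def gv_simps)
    have e2: "brk (lbw [Gy,Gx,Gx,Gx]) (lbw [Gy,Gx]) = (brk (brk (brk (brk genY genX) genX) genX) (brk genY genX) :: 'a npoly)"
      by (simp add: bstep_def gv_simps)
    have e3: "brk (lbw [Gy,Gx,Gy]) (lbw [Gy,Gx,Gx]) = (brk (brk (brk genY genX) genY) (brk (brk genY genX) genX) :: 'a npoly)"
      by (simp add: bstep_def gv_simps)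
    have m1: "lbw [Gy,Gx,Gx,Gx,Gx,Gx] \<in> lie_gen ?S" unfolding e1
      by (intro lie_gen.bracket u x)
    have m2: "brk (lbw [Gy,Gx,Gx,Gx]) (lbw [Gy,Gx]) \<in> lie_gen ?S" unfolding e2
      by (intro lie_gen.bracket u x)
    have m3: "brk (lbw [Gy,Gx,Gy]) (lbw [Gy,Gx,Gx]) \<in> lie_gen ?S" unfolding e3 by (rule w)
    show ?thesis unfolding T_def by (intro lie_gen.add lie_gen.scale m1 m2 m3)
  qed
  ultimately show ?thesis by simp
qed

end
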